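(* Let $\varepsilon>0$, let $c=(1+\varepsilon)n$, let $D$ be a positive integer and let $\frac{\log n}{n}\le p\le\frac{2\log n}{n}$. Then with probability $1-o(1)$ the graph $G\sim\mathcal G_c(n,p)$ has the following property: for every $j\le\frac{n}{\log^{0.9}n}$ and every collection of $j$ vertex-disjoint stars in $G$, each with $\log^{0.2}n$ edges, the number of distinct colors appearing on their edges is at least $2Dj$.
   Context: $\mathcal G_c(n,p)$: random graph on $[n]$, each pair an edge independently with probability $p$, each edge colored uniformly and independently from $[c]$. Asymptotics as $n\to\infty$. *)

theory Defs
  imports "HOL-Probability.Probability"
begin

text \<open>Random edge-coloured graph G_c(n,p) on vertex set {0..<n}.
  An outcome is a map from unordered pairs (u,v), u<v<n, to
  None (no edge) or Some k (edge with colour k in {0..<c}).\<close>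

definition edge_pmf :: "real \<Rightarrow> nat \<Rightarrow> nat option pmf" where
  "edge_pmf p c = bind_pmf (bernoulli_pmf p)
     (\<lambda>b. if b then map_pmf Some (pmf_of_set {..<c}) else return_pmf None)"

definition vpairs :: "nat \<Rightarrow> (nat \<times> nat) set" where
  "vpairs n = {(u, v). u < v \<and> v < n}"

definition Gc :: "nat \<Rightarrow> real \<Rightarrow> nat \<Rightarrow> (nat \<times> nat \<Rightarrow> nat option) pmf" where
  "Gc n p c = Pi_pmf (vpairs n) None (\<lambda>_. edge_pmf p c)"

definition ecol :: "(nat \<times> nat \<Rightarrow> nat option) \<Rightarrow> nat \<Rightarrow> nat \<Rightarrow> nat option" where
  "ecol \<omega> u v = \<omega> (min u v, max u v)"

definition star_family ::
  "(nat \<times> nat \<Rightarrow> nat option) \<Rightarrow> nat \<Rightarrow> nat \<Rightarrow> nat \<Rightarrow> (nat \<Rightarrow> nat) \<Rightarrow> (nat \<Rightarrow> nat set) \<Rightarrow> bool" where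
  "star_family \<omega> n s j cen L \<longleftrightarrow>
     (\<forall>i<j. cen i < n \<and> L i \<subseteq> {..<n} \<and> cen i \<notin> L i \<and> card (L i) = s \<and>
            (\<forall>y\<in>L i. ecol \<omega> (cen i) y \<noteq> None)) \<and>
     (\<forall>i<j. \<forall>k<j. i \<noteq> k \<longrightarrow> insert (cen i) (L i) \<inter> insert (cen k) (L k) = {})"

definition star_colors ::
  "(nat \<times> nat \<Rightarrow> nat option) \<Rightarrow> nat \<Rightarrow> (nat \<Rightarrow> nat) \<Rightarrow> (nat \<Rightarrow> nat set) \<Rightarrow> nat set" where
  "star_colors \<omega> j cen L = {k. \<exists>i<j. \<exists>y\<in>L i. ecol \<omega> (cen i) y = Some k}"

definition star_prop :: "nat \<Rightarrow> nat \<Rightarrow> (nat \<times> nat \<Rightarrow> nat option) \<Rightarrow> bool" where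
  "star_prop n D \<omega> \<longleftrightarrow>
     (\<forall>j cen L. real j \<le> real n / (ln (real n) powr 0.9) \<and>
        star_family \<omega> n (nat \<lfloor>ln (real n) powr 0.2\<rfloor>) j cen L \<longrightarrow>
        2 * D * j \<le> card (star_colors \<omega> j cen L))"

end

theory Submission imports Defs "HOL-Real_Asymp.Real_Asymp" begin


definition Xs :: "nat \<Rightarrow> nat \<Rightarrow> (nat \<times> nat set) set" where
  "Xs n s = {..<n} \<times> {L. L \<subseteq> {..<n} \<and> card L = s}"
definition edgesOf :: "(nat \<times> nat set) set \<Rightarrow> (nat \<times> nat) set" where
  "edgesOf S = (\<Union>(a,L)\<in>S. (\<lambda>y. (min a y, max a y)) ` L)"
definition Sfam :: "nat \<Rightarrow> nat \<Rightarrow> nat \<Rightarrow> (nat \<times> nat set) set set" where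
  "Sfam n s j = {S. S \<subseteq> Xs n s \<and> card S = j \<and> card (edgesOf S) = s * j \<and> edgesOf S \<subseteq> vpairs n}"
definition Tfam :: "nat \<Rightarrow> nat \<Rightarrow> nat set set" where
  "Tfam c m = {T. T \<subseteq> {..<c} \<and> card T = m}"
definition Aev :: "(nat \<times> nat set) set \<Rightarrow> nat set \<Rightarrow> (nat \<times> nat \<Rightarrow> nat option) set" where
  "Aev S T = {\<omega>. \<forall>e\<in>edgesOf S. \<omega> e \<in> Some ` T}"

lemma edge_pmf_Some:
  assumes "0 \<le> p" "p \<le> 1" "c > 0"
  shows "pmf (edge_pmf p c) (Some k) = (if k < c then p / c else 0)"
  unfolding edge_pmf_def using assms
  by (simp add: pmf_bind pmf_map_inj' inj_on_def lessThan_empty_iff)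

lemma edge_prob:
  assumes "0 \<le> p" "p \<le> 1" "c > 0" "T \<subseteq> {..<c}"
  shows "measure_pmf.prob (edge_pmf p c) (Some ` T) = p * card T / c"
proof -
  have fT: "finite T" using assms(4) finite_subset by blast
  have "measure_pmf.prob (edge_pmf p c) (Some ` T) = (\<Sum>x\<in>Some ` T. pmf (edge_pmf p c) x)"
    using fT by (simp add: measure_measure_pmf_finite)
  also have "\<dots> = (\<Sum>k\<in>T. pmf (edge_pmf p c) (Some k))"
    by (simp add: sum.reindex)
  also have "\<dots> = (\<Sum>k\<in>T. p / c)"
    using assms by (intro sum.cong) (auto simp: edge_pmf_Some)
  finally show ?thesis by simp
qed

lemma finite_vpairs: "finite (vpairs n)"
  by (rule finite_subset[of _ "{..<n} \<times> {..<n}"]) (auto simp: vpairs_def)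

lemma probA:
  assumes "0 \<le> p" "p \<le> 1" "c > 0" "T \<subseteq> {..<c}" "E \<subseteq> vpairs n"
  shows "measure_pmf.prob (Gc n p c) {\<omega>. \<forall>e\<in>E. \<omega> e \<in> Some ` T} = (p * card T / c) ^ card E"
proof -
  have fE: "finite E" using assms(5) finite_vpairs finite_subset by blast
  have eq: "{\<omega>. \<forall>e\<in>E. \<omega> e \<in> Some ` T} = Pi (vpairs n) (\<lambda>e. if e \<in> E then Some ` T else UNIV)"
    using assms(5) by (auto simp: Pi_def)
  have "measure_pmf.prob (Gc n p c) {\<omega>. \<forall>e\<in>E. \<omega> e \<in> Some ` T}
     = (\<Prod>e\<in>vpairs n. measure_pmf.prob (edge_pmf p c) (if e \<in> E then Some ` T else UNIV))"
    unfolding eq Gc_def by (rule measure_Pi_pmf_Pi[OF finite_vpairs])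
  also have "\<dots> = (\<Prod>e\<in>vpairs n. if e \<in> E then p * card T / c else 1)"
    using assms by (intro prod.cong) (auto simp: edge_prob)
  also have "\<dots> = (p * card T / c) ^ card E"
    using assms(5) fE by (simp add: prod.If_cases finite_vpairs Int_absorb1 Int_def[symmetric])
  finally show ?thesis .
qed


lemma cover:
  assumes fam: "star_family \<omega> n s j cen L"
    and col: "card (star_colors \<omega> j cen L) \<le> m" and mc: "m \<le> c"
    and supp: "\<And>e k. \<omega> e = Some k \<Longrightarrow> k < c"
  shows "j \<le> n \<and> (\<exists>T\<in>Tfam c m. \<exists>S\<in>Sfam n s j. \<omega> \<in> Aev S T)"
proof -
  have st: "\<And>i. i < j \<Longrightarrow> cen i < n \<and> L i \<subseteq> {..<n} \<and> cen i \<notin> L i \<and> card (L i) = s \<and>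
            (\<forall>y\<in>L i. ecol \<omega> (cen i) y \<noteq> None)"
    using fam unfolding star_family_def by blast
  have dj: "\<And>i k. i < j \<Longrightarrow> k < j \<Longrightarrow> i \<noteq> k \<Longrightarrow> insert (cen i) (L i) \<inter> insert (cen k) (L k) = {}"
    using fam unfolding star_family_def by blast
  have fin: "\<And>i. i < j \<Longrightarrow> finite (L i)"
  proof -
    fix i assume "i < j"
    then have "L i \<subseteq> {..<n}" using st by blast
    then show "finite (L i)" using finite_subset by blast
  qed
  have injc: "inj_on cen {..<j}"
  proof (rule inj_onI)
    fix i k assume "i \<in> {..<j}" "k \<in> {..<j}" "cen i = cen k"
    then show "i = k" using dj[of i k] by auto
  qed
  have jn: "j \<le> n"
  proof -
    have "cen ` {..<j} \<subseteq> {..<n}" using st by auto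
    then have "card (cen ` {..<j}) \<le> n" by (metis card_lessThan card_mono finite_lessThan)
    then show ?thesis using card_image[OF injc] by simp
  qed
  define S where "S = (\<lambda>i. (cen i, L i)) ` {..<j}"
  have injS: "inj_on (\<lambda>i. (cen i, L i)) {..<j}"
    using injc by (auto simp: inj_on_def)
  have cardS: "card S = j" unfolding S_def using card_image[OF injS] by simp
  have SX: "S \<subseteq> Xs n s" unfolding S_def Xs_def using st by auto
  define f where "f = (\<lambda>(i, y). (min (cen i) y, max (cen i) y))"
  have E: "edgesOf S = f ` (SIGMA i:{..<j}. L i)"
    unfolding edgesOf_def S_def f_def by auto
  have injf: "inj_on f (SIGMA i:{..<j}. L i)"
  proof (rule inj_onI)
    fix u v assume u: "u \<in> (SIGMA i:{..<j}. L i)" and v: "v \<in> (SIGMA i:{..<j}. L i)" and eq: "f u = f v"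
    obtain i y where uu: "u = (i, y)" "i < j" "y \<in> L i" using u by auto
    obtain k z where vv: "v = (k, z)" "k < j" "z \<in> L k" using v by auto
    have ne1: "cen i \<noteq> y" using st[of i] uu by auto
    have ne2: "cen k \<noteq> z" using st[of k] vv by auto
    have set_eq: "{cen i, y} = {cen k, z}"
      using eq uu vv unfolding f_def
      by (auto simp: min_def max_def split: if_splits)
    show "u = v"
    proof (cases "i = k")
      case True
      then show ?thesis using set_eq uu vv by (auto simp: doubleton_eq_iff)
    next
      case False
      have "cen i \<in> insert (cen k) (L k)" using set_eq vv by (auto simp: doubleton_eq_iff)
      then show ?thesis using dj[of i k] False uu vv by auto
    qed
  qed
  have cardE: "card (edgesOf S) = s * j"
  proof -
    have "card (edgesOf S) = card (SIGMA i:{..<j}. L i)"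
      unfolding E by (rule card_image[OF injf])
    also have "\<dots> = (\<Sum>i<j. card (L i))" using fin by (simp add: card_SigmaI)
    also have "\<dots> = (\<Sum>i<j. s)" using st by (intro sum.cong) auto
    finally show ?thesis by simp
  qed
  have Ev: "edgesOf S \<subseteq> vpairs n"
  proof
    fix e assume "e \<in> edgesOf S"
    then obtain i y where iy: "i < j" "y \<in> L i" "e = (min (cen i) y, max (cen i) y)"
      unfolding E f_def by auto
    have "cen i < n" "y < n" "cen i \<noteq> y" using st[OF iy(1)] iy(2) by auto
    then show "e \<in> vpairs n" using iy(3) unfolding vpairs_def by (auto simp: min_def max_def)
  qed
  have SS: "S \<in> Sfam n s j" unfolding Sfam_def using SX cardS cardE Ev by auto
  define C where "C = star_colors \<omega> j cen L"
  have Cc: "C \<subseteq> {..<c}" unfolding C_def star_colors_def ecol_def using supp by auto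
  obtain T where T: "C \<subseteq> T" "T \<subseteq> {..<c}" "card T = m"
    using exists_subset_between[of C m "{..<c}"] Cc col mc C_def by auto
  have "\<omega> \<in> Aev S T"
  proof -
    have "\<omega> e \<in> Some ` T" if "e \<in> edgesOf S" for e
    proof -
      from that obtain i y where iy: "i < j" "y \<in> L i" "e = (min (cen i) y, max (cen i) y)"
        unfolding E f_def by auto
      have "ecol \<omega> (cen i) y \<noteq> None" using st iy by auto
      then obtain k where k: "\<omega> e = Some k" using iy by (auto simp: ecol_def)
      have "k \<in> C" unfolding C_def star_colors_def using iy k by (auto simp: ecol_def)
      then show ?thesis using k T by auto
    qed
    then show ?thesis unfolding Aev_def by auto
  qed
  then show ?thesis using jn SS T by (auto simp: Tfam_def)
qed

lemma finite_Xs: "finite (Xs n s)"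
  unfolding Xs_def by auto

lemma card_Xs: "card (Xs n s) = n * (n choose s)"
proof -
  have "card {L. L \<subseteq> {..<n} \<and> card L = s} = n choose s"
    using n_subsets[of "{..<n}" s] by simp
  then show ?thesis unfolding Xs_def by (simp add: card_cartesian_product)
qed

lemma card_Sfam: "card (Sfam n s j) \<le> (n * (n choose s)) choose j"
proof -
  have "Sfam n s j \<subseteq> {S. S \<subseteq> Xs n s \<and> card S = j}" unfolding Sfam_def by auto
  then have "card (Sfam n s j) \<le> card {S. S \<subseteq> Xs n s \<and> card S = j}"
    by (rule card_mono[rotated]) (simp add: finite_Xs)
  also have "\<dots> = (n * (n choose s)) choose j"
    using n_subsets[OF finite_Xs] card_Xs by simp
  finally show ?thesis .
qed

lemma finite_Sfam: "finite (Sfam n s j)"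
  by (rule finite_subset[of _ "Pow (Xs n s)"]) (auto simp: Sfam_def finite_Xs)

lemma finite_Tfam: "finite (Tfam c m)"
  by (rule finite_subset[of _ "Pow {..<c}"]) (auto simp: Tfam_def)

lemma card_Tfam: "card (Tfam c m) = c choose m"
  unfolding Tfam_def using n_subsets[of "{..<c}" m] by simp

lemma supp_Gc:
  assumes "0 \<le> p" "p \<le> 1" "c > 0" "\<omega> \<in> set_pmf (Gc n p c)" "\<omega> e = Some k"
  shows "k < c"
proof (rule ccontr)
  assume "\<not> k < c"
  then have "pmf (edge_pmf p c) (Some k) = 0" using assms by (simp add: edge_pmf_Some)
  then have nk: "Some k \<notin> set_pmf (edge_pmf p c)" by (simp add: set_pmf_iff)
  have "\<omega> \<in> PiE_dflt (vpairs n) None (set_pmf \<circ> (\<lambda>_. edge_pmf p c))"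
    using assms(4) unfolding Gc_def set_Pi_pmf[OF finite_vpairs] .
  then have "e \<in> vpairs n \<longrightarrow> \<omega> e \<in> set_pmf (edge_pmf p c)" "e \<notin> vpairs n \<longrightarrow> \<omega> e = None"
    unfolding PiE_dflt_def by (cases e, auto)+
  then show False using nk assms(5) by (cases "e \<in> vpairs n") auto
qed

lemma prob_bad_bound:
  fixes n D c :: nat and p B :: real
  defines "s \<equiv> nat \<lfloor>ln (real n) powr 0.2\<rfloor>" and "B \<equiv> real n / (ln (real n) powr 0.9)"
  assumes p: "0 \<le> p" "p \<le> 1" and c: "c > 0"
    and hJ: "\<And>j. real j \<le> B \<Longrightarrow> 2 * D * j \<le> c"
  shows "measure_pmf.prob (Gc n p c) {\<omega>. \<not> star_prop n D \<omega>}
     \<le> (\<Sum>j\<in>{j. 1 \<le> j \<and> j \<le> n \<and> real j \<le> B}.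
          real (c choose (2*D*j-1)) * real ((n * (n choose s)) choose j) * (p * real (2*D*j-1) / c) ^ (s*j))"
proof -
  define J where "J = {j. 1 \<le> j \<and> j \<le> n \<and> real j \<le> B}"
  have fJ: "finite J" unfolding J_def by (rule finite_subset[of _ "{..n}"]) auto
  define M where "M = Gc n p c"
  have sub: "{\<omega>. \<not> star_prop n D \<omega>} \<inter> set_pmf M
      \<subseteq> (\<Union>j\<in>J. \<Union>T\<in>Tfam c (2*D*j-1). \<Union>S\<in>Sfam n s j. Aev S T)"
  proof
    fix \<omega> assume w: "\<omega> \<in> {\<omega>. \<not> star_prop n D \<omega>} \<inter> set_pmf M"
    then obtain j cen L where j: "real j \<le> B" "star_family \<omega> n s j cen L"
        "\<not> 2 * D * j \<le> card (star_colors \<omega> j cen L)"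
      unfolding star_prop_def s_def B_def by auto
    have j1: "1 \<le> j" using j(3) by (cases j) auto
    have col: "card (star_colors \<omega> j cen L) \<le> 2*D*j-1" using j(3) by linarith
    have mc: "2*D*j-1 \<le> c" using hJ[OF j(1)] by linarith
    have supp: "\<And>e k. \<omega> e = Some k \<Longrightarrow> k < c"
      using supp_Gc[OF p c] w unfolding M_def by blast
    have cv: "j \<le> n \<and> (\<exists>T\<in>Tfam c (2*D*j-1). \<exists>S\<in>Sfam n s j. \<omega> \<in> Aev S T)"
      by (rule cover[OF j(2) col mc]) (rule supp)
    from cv obtain T S where
      jn: "j \<le> n" and T: "T \<in> Tfam c (2*D*j-1)" and S: "S \<in> Sfam n s j" and wA: "\<omega> \<in> Aev S T"
      by blast
    have "j \<in> J" unfolding J_def using j1 jn j(1) by auto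
    then show "\<omega> \<in> (\<Union>j\<in>J. \<Union>T\<in>Tfam c (2*D*j-1). \<Union>S\<in>Sfam n s j. Aev S T)"
      using T S wA by blast
  qed
  have "measure_pmf.prob M {\<omega>. \<not> star_prop n D \<omega>}
      = measure_pmf.prob M ({\<omega>. \<not> star_prop n D \<omega>} \<inter> set_pmf M)"
    by (simp add: measure_Int_set_pmf)
  also have "\<dots> \<le> measure_pmf.prob M (\<Union>j\<in>J. \<Union>T\<in>Tfam c (2*D*j-1). \<Union>S\<in>Sfam n s j. Aev S T)"
    by (rule measure_pmf.finite_measure_mono[OF sub]) simp
  also have "\<dots> \<le> (\<Sum>j\<in>J. measure_pmf.prob M (\<Union>T\<in>Tfam c (2*D*j-1). \<Union>S\<in>Sfam n s j. Aev S T))"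
    by (rule measure_pmf.finite_measure_subadditive_finite[OF fJ]) simp
  also have "\<dots> \<le> (\<Sum>j\<in>J. \<Sum>T\<in>Tfam c (2*D*j-1). measure_pmf.prob M (\<Union>S\<in>Sfam n s j. Aev S T))"
    by (intro sum_mono measure_pmf.finite_measure_subadditive_finite finite_Tfam) simp
  also have "\<dots> \<le> (\<Sum>j\<in>J. \<Sum>T\<in>Tfam c (2*D*j-1). \<Sum>S\<in>Sfam n s j. measure_pmf.prob M (Aev S T))"
    by (intro sum_mono measure_pmf.finite_measure_subadditive_finite finite_Sfam) simp
  also have "\<dots> = (\<Sum>j\<in>J. \<Sum>T\<in>Tfam c (2*D*j-1). \<Sum>S\<in>Sfam n s j. (p * real (2*D*j-1) / c) ^ (s*j))"
  proof (intro sum.cong refl)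
    fix j T S assume T: "T \<in> Tfam c (2*D*j-1)" and S: "S \<in> Sfam n s j"
    have "measure_pmf.prob M (Aev S T) = (p * card T / c) ^ card (edgesOf S)"
      unfolding M_def Aev_def
      by (rule probA) (use p c T S in \<open>auto simp: Tfam_def Sfam_def\<close>)
    then show "measure_pmf.prob M (Aev S T) = (p * real (2*D*j-1) / c) ^ (s*j)"
      using T S by (simp add: Tfam_def Sfam_def)
  qed
  also have "\<dots> = (\<Sum>j\<in>J. real (c choose (2*D*j-1)) * real (card (Sfam n s j)) * (p * real (2*D*j-1) / c) ^ (s*j))"
    by (simp add: card_Tfam mult.assoc)
  also have "\<dots> \<le> (\<Sum>j\<in>J. real (c choose (2*D*j-1)) * real ((n * (n choose s)) choose j) * (p * real (2*D*j-1) / c) ^ (s*j))"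
    by (intro sum_mono mult_right_mono mult_left_mono) (use card_Sfam p in auto)
  finally show ?thesis unfolding M_def J_def .
qed



lemma pow_div_fact_le_exp:
  fixes x :: real assumes "0 \<le> x"
  shows "x ^ k / fact k \<le> exp x"
proof -
  have sm: "summable (\<lambda>n. x ^ n /\<^sub>R fact n)"
    using summable_exp_generic[of x] by simp
  have "(\<Sum>n\<in>{k}. x ^ n /\<^sub>R fact n) \<le> (\<Sum>n. x ^ n /\<^sub>R fact n)"
    by (rule sum_le_suminf[OF sm]) (use assms in auto)
  then show ?thesis by (simp add: exp_def divide_inverse mult.commute)
qed

lemma choose_le_pow_div_fact: "real (a choose b) \<le> real a ^ b / fact b"
proof (cases "b \<le> a")
  case True
  have "fact b * fact (a - b) * (a choose b) = fact a" by (rule binomial_fact_lemma[OF True])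
  then have "(a choose b) * fact b = fact a div fact (a - b)"
    by (metis fact_nonzero mult.commute nonzero_mult_div_cancel_left mult.assoc)
  also have "\<dots> \<le> a ^ b" by (rule fact_div_fact_le_pow[OF True])
  finally have "real ((a choose b) * fact b) \<le> real (a ^ b)" by (simp only: of_nat_le_iff)
  then have "real (a choose b) * fact b \<le> real a ^ b" by simp
  then show ?thesis by (simp add: field_simps)
next
  case False
  then have z: "a choose b = 0" by (simp add: binomial_eq_0)
  have "0 \<le> real a ^ b / fact b" by simp
  then show ?thesis by (simp only: z of_nat_0)
qed

lemma pow_div_fact_le: "real a ^ b / fact b \<le> (exp 1 * real a / real b) ^ b" if "b > 0"
proof -
  have "real b ^ b / fact b \<le> exp (real b)" by (rule pow_div_fact_le_exp) simp
  also have "exp (real b) = exp 1 ^ b" by (simp add: exp_of_nat_mult[symmetric])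
  finally have h: "real b ^ b / fact b \<le> exp 1 ^ b" .
  have "real a ^ b / fact b = (real a / real b) ^ b * (real b ^ b / fact b)"
    using that by (simp add: power_divide)
  also have "\<dots> \<le> (real a / real b) ^ b * exp 1 ^ b"
    by (rule mult_left_mono[OF h]) simp
  also have "\<dots> = (real a / real b * exp 1) ^ b" by (simp only: power_mult_distrib)
  also have "real a / real b * exp 1 = exp 1 * real a / real b" by simp
  finally show ?thesis .
qed

lemma term_bound:
  fixes n c s j D :: nat and p L x0 :: real
  assumes D: "D \<ge> 1" and j: "j \<ge> 1" and cn: "n \<le> c" and n: "n \<ge> 1" and jc: "2*D*j \<le> c"
    and s: "2*D+1 \<le> s" and p: "0 \<le> p" and np: "real n * p \<le> 2*L" and jx: "real j \<le> real n * x0"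
  shows "real (c choose (2*D*j-1)) * real ((n*(n choose s)) choose j) * (p * real (2*D*j-1) / real c)^(s*j)
     \<le> (exp (real (2*D+1)) * (2*exp 1*L/real s)^s * (2*real D)^(s-2*D) * x0^(s-2*D-1))^j"
proof -
  define m where "m = 2*D*j-1"
  have dj: "D * j \<ge> 1" using D j by (simp add: one_le_mult_iff)
  have m1: "m \<ge> 1" unfolding m_def using D j by (cases D; cases j) auto
  have mle: "m \<le> 2*D*j" unfolding m_def by simp
  have mc: "m \<le> c" using mle jc by simp
  have mler: "real m \<le> 2 * real D * real j"
  proof -
    have "real m \<le> real (2*D*j)" using mle by (simp only: of_nat_le_iff)
    then show ?thesis by simp
  qed
  have c0: "c > 0" using cn n by simp
  have s0: "s > 0" using s by simp
  define x where "x = real j / real n"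
  have x0: "x > 0" unfolding x_def using j n by simp
  have xx0: "x \<le> x0" unfolding x_def using jx n by (simp add: field_simps)
  define N where "N = n * (n choose s)"
  have A1: "real (c choose m) * (real m / real c) ^ m \<le> exp (real m)"
  proof -
    have "real (c choose m) * (real m / real c) ^ m \<le> real c ^ m / fact m * (real m / real c) ^ m"
      by (rule mult_right_mono[OF choose_le_pow_div_fact]) simp
    also have "\<dots> = real m ^ m / fact m" using c0 by (simp add: power_divide)
    also have "\<dots> \<le> exp (real m)" by (rule pow_div_fact_le_exp) simp
    finally show ?thesis .
  qed
  have "(2*D+1)*j \<le> s*j" using s by (rule mult_le_mono1)
  then have msj: "m \<le> s * j" unfolding m_def by (simp add: algebra_simps)
  have sjm: "(s - 2*D) * j \<le> s * j - m" using mle by (simp add: diff_mult_distrib)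
  have mc1: "real m / real c \<le> 1" using mc c0 by simp
  have A3: "(real m / real c) ^ (s*j - m) \<le> (real m / real c) ^ ((s - 2*D) * j)"
    by (rule power_decreasing[OF sjm]) (use mc1 in auto)
  have mcx: "real m / real c \<le> 2 * real D * x"
  proof -
    have "real m \<le> real (2*D*j)" using mle by (simp only: of_nat_le_iff)
    then have "real m / real c \<le> real (2*D*j) / real c" by (rule divide_right_mono) simp
    also have "\<dots> \<le> real (2*D*j) / real n" using cn n by (simp add: frac_le)
    also have "\<dots> = 2 * real D * x" unfolding x_def by simp
    finally show ?thesis .
  qed
  have A4: "(real m / real c) ^ ((s - 2*D) * j) \<le> (2 * real D * x) ^ ((s - 2*D) * j)"
    by (rule power_mono[OF mcx]) simp
  have U: "real (c choose m) * (real m / real c) ^ (s*j) \<le> exp (real (2*D)) ^ j * ((2 * real D * x) ^ (s - 2*D)) ^ j"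
  proof -
    have "(real m / real c) ^ (s*j) = (real m / real c) ^ m * (real m / real c) ^ (s*j - m)"
      using msj by (simp add: power_add[symmetric])
    then have "real (c choose m) * (real m / real c) ^ (s*j)
        = (real (c choose m) * (real m / real c) ^ m) * (real m / real c) ^ (s*j - m)" by simp
    also have "\<dots> \<le> exp (real m) * (2 * real D * x) ^ ((s - 2*D) * j)"
      by (rule mult_mono[OF A1 order.trans[OF A3 A4]]) auto
    also have "\<dots> \<le> exp (real (2*D*j)) * (2 * real D * x) ^ ((s - 2*D) * j)"
      by (rule mult_right_mono) (use mler x0 in auto)
    also have "\<dots> = exp (real (2*D)) ^ j * ((2 * real D * x) ^ (s - 2*D)) ^ j"
      by (simp add: exp_of_nat_mult[symmetric] power_mult[symmetric] mult.commute mult.left_commute)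
    finally show ?thesis .
  qed
  have Nb: "real N \<le> real n * (exp 1 * real n / real s) ^ s"
  proof -
    have "real (n choose s) \<le> (exp 1 * real n / real s) ^ s"
      using choose_le_pow_div_fact[of n s] pow_div_fact_le[OF s0, of n] by linarith
    then show ?thesis unfolding N_def by (simp add: mult_left_mono)
  qed
  have V: "real (N choose j) \<le> (exp 1 / x) ^ j * ((exp 1 * real n / real s) ^ s) ^ j"
  proof -
    have "real (N choose j) \<le> real N ^ j / fact j" by (rule choose_le_pow_div_fact)
    also have "\<dots> \<le> (real n * (exp 1 * real n / real s) ^ s) ^ j / fact j"
      by (intro divide_right_mono power_mono Nb) auto
    also have "\<dots> = (real n ^ j / fact j) * ((exp 1 * real n / real s) ^ s) ^ j"
      by (simp add: power_mult_distrib)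
    also have "\<dots> \<le> (exp 1 * real n / real j) ^ j * ((exp 1 * real n / real s) ^ s) ^ j"
      by (rule mult_right_mono[OF pow_div_fact_le]) (use j in auto)
    also have "exp 1 * real n / real j = exp 1 / x" unfolding x_def by simp
    finally show ?thesis .
  qed
  define Q where "Q = exp (real (2*D)) * (2 * real D * x) ^ (s - 2*D) * (exp 1 / x) * (exp 1 * real n / real s) ^ s * p ^ s"
  have tot: "real (c choose m) * real (N choose j) * (p * real m / real c)^(s*j) \<le> Q ^ j"
  proof -
    have "p * real m / real c = p * (real m / real c)" by simp
    then have "(p * real m / real c)^(s*j) = p^(s*j) * (real m / real c)^(s*j)"
      by (simp only: power_mult_distrib)
    also have "p^(s*j) = (p^s)^j" by (rule power_mult)
    finally have pe: "(p * real m / real c)^(s*j) = (p^s)^j * (real m / real c)^(s*j)" .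
    have "real (c choose m) * real (N choose j) * (p * real m / real c)^(s*j)
        = (real (c choose m) * (real m / real c) ^ (s*j)) * real (N choose j) * (p ^ s) ^ j"
      unfolding pe by (simp only: mult_ac)
    also have "\<dots> \<le> (exp (real (2*D)) ^ j * ((2 * real D * x) ^ (s - 2*D)) ^ j)
          * ((exp 1 / x) ^ j * ((exp 1 * real n / real s) ^ s) ^ j) * (p ^ s) ^ j"
      by (intro mult_mono U V) (use x0 p in auto)
    also have "\<dots> = Q ^ j" unfolding Q_def by (simp only: power_mult_distrib mult_ac)
    finally show ?thesis .
  qed
  have Qb: "Q \<le> exp (real (2*D+1)) * (2*exp 1*L/real s)^s * (2*real D)^(s-2*D) * x0^(s-2*D-1)"
  proof -
    have e1: "(2 * real D * x) ^ (s - 2*D) * (exp 1 / x) = exp 1 * (2 * real D) ^ (s - 2*D) * x ^ (s - 2*D - 1)"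
    proof -
      have "s - 2*D = Suc (s - 2*D - 1)" using s by simp
      then have "x ^ (s - 2*D) = x * x ^ (s - 2*D - 1)" by (metis power_Suc)
      then show ?thesis using x0 by (simp add: power_mult_distrib field_simps)
    qed
    have "(exp 1 * real n / real s) ^ s * p ^ s = (exp 1 * real n / real s * p) ^ s"
      by (simp only: power_mult_distrib)
    also have "exp 1 * real n / real s * p = exp 1 * (real n * p) / real s" by simp
    finally have e2: "(exp 1 * real n / real s) ^ s * p ^ s = (exp 1 * (real n * p) / real s) ^ s" .
    have Q': "Q = exp (real (2*D)) * exp 1 * (2 * real D) ^ (s - 2*D) * x ^ (s - 2*D - 1) * (exp 1 * (real n * p) / real s) ^ s"
    proof -
      have "Q = exp (real (2*D)) * ((2 * real D * x) ^ (s - 2*D) * (exp 1 / x)) * ((exp 1 * real n / real s) ^ s * p ^ s)"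
        unfolding Q_def by (simp only: mult_ac)
      also have "\<dots> = exp (real (2*D)) * (exp 1 * (2 * real D) ^ (s - 2*D) * x ^ (s - 2*D - 1)) * (exp 1 * (real n * p) / real s) ^ s"
        by (simp only: e1 e2)
      finally show ?thesis by (simp only: mult_ac)
    qed
    have b1: "x ^ (s - 2*D - 1) \<le> x0 ^ (s - 2*D - 1)" by (rule power_mono[OF xx0]) (use x0 in auto)
    have b2: "(exp 1 * (real n * p) / real s) ^ s \<le> (2*exp 1*L/real s)^s"
      by (rule power_mono) (use np p s0 in \<open>auto simp: divide_right_mono\<close>)
    have "Q \<le> exp (real (2*D)) * exp 1 * (2 * real D) ^ (s - 2*D) * x0 ^ (s - 2*D - 1) * (2*exp 1*L/real s)^s"
      unfolding Q' by (intro mult_mono b1 b2 mult_nonneg_nonneg) (use x0 xx0 p in auto)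
    also have "exp (real (2*D)) * exp 1 = exp (real (2*D+1))" by (simp add: exp_add[symmetric])
    finally show ?thesis by (simp add: mult_ac)
  qed
  have Q0: "0 \<le> Q" unfolding Q_def using x0 p by simp
  have "Q ^ j \<le> (exp (real (2*D+1)) * (2*exp 1*L/real s)^s * (2*real D)^(s-2*D) * x0^(s-2*D-1)) ^ j"
    by (rule power_mono[OF Qb Q0])
  with tot show ?thesis unfolding m_def N_def by simp
qed



lemma r_bound:
  fixes L :: real and s D :: nat
  assumes D: "D \<ge> 1" and L: "L \<ge> 1" and s: "2*D+1 \<le> s"
    and sL1: "real s \<ge> L powr 0.2 - 1" and L2: "L powr 0.2 \<ge> 2"
    and eD: "8 * exp 1 * real D \<le> L powr 0.05"
  shows "exp (real (2*D+1)) * (2*exp 1*L/real s)^s * (2*real D)^(s-2*D) * (1 / L powr 0.9)^(s-2*D-1)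
     \<le> exp (real (2*D+1)) / (2*real D)^(2*D) * L powr (0.9 * real (2*D+1)) * (L powr (-0.05)) powr (L powr 0.2 - 1)"
proof -
  define x0 where "x0 = 1 / L powr 0.9"
  have L0: "L > 0" using L by simp
  have x00: "x0 > 0" unfolding x0_def using L0 by simp
  have D0: "2 * real D > 0" using D by simp
  have s0: "real s > 0" using s by simp
  have st1: "(2*real D)^(s-2*D) = (2*real D)^s / (2*real D)^(2*D)"
    by (rule power_diff) (use D0 s in auto)
  have st2: "x0^(s-2*D-1) = x0^s / x0^(2*D+1)"
    using power_diff[of x0 "2*D+1" s] x00 s by (simp add: diff_diff_add)
  have st3: "1 / x0^(2*D+1) = L powr (0.9 * real (2*D+1))"
  proof -
    have "1 / x0^(2*D+1) = (L powr 0.9)^(2*D+1)" unfolding x0_def by (simp add: power_one_over)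
    also have "\<dots> = (L powr 0.9) powr real (2*D+1)" by (rule powr_realpow[symmetric]) (use L0 in simp)
    also have "\<dots> = L powr (0.9 * real (2*D+1))" by (simp add: powr_powr)
    finally show ?thesis .
  qed
  define b where "b = 2*exp 1*L/real s * (2*real D) * x0"
  define K where "K = exp (real (2*D+1)) / (2*real D)^(2*D)"
  have LHS: "exp (real (2*D+1)) * (2*exp 1*L/real s)^s * (2*real D)^(s-2*D) * x0^(s-2*D-1)
      = K * L powr (0.9 * real (2*D+1)) * b^s"
  proof -
    have "exp (real (2*D+1)) * (2*exp 1*L/real s)^s * (2*real D)^(s-2*D) * x0^(s-2*D-1)
       = exp (real (2*D+1)) / (2*real D)^(2*D) * (1 / x0^(2*D+1)) * ((2*exp 1*L/real s)^s * (2*real D)^s * x0^s)"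
      unfolding st1 st2 by (simp add: field_simps)
    also have "(2*exp 1*L/real s)^s * (2*real D)^s * x0^s = b^s"
      unfolding b_def by (simp only: power_mult_distrib)
    finally show ?thesis unfolding K_def st3 by simp
  qed
  define y where "y = L powr (-0.05)"
  have y0: "y > 0" unfolding y_def using L0 by simp
  have y1: "y \<le> 1"
  proof -
    have a1: "1 \<le> L powr 0.05" by (rule ge_one_powr_ge_zero[OF L]) simp
    have "1 / L powr 0.05 \<le> 1" using a1 by (simp add: divide_le_eq_1)
    moreover have "y = 1 / L powr 0.05" unfolding y_def by (rule powr_minus_divide)
    ultimately show ?thesis by (simp only:)
  qed
  have Lx0: "L * x0 = L powr 0.1"
  proof -
    have "L powr (1 - 0.9) = L powr 1 / L powr 0.9" by (rule powr_diff)
    then have "L powr 0.1 = L / L powr 0.9" using L0 by simp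
    then show ?thesis unfolding x0_def by simp
  qed
  have sh: "real s \<ge> L powr 0.2 / 2" using sL1 L2 by simp
  have b0: "b \<ge> 0" unfolding b_def using L0 x00 s0 by simp
  have by_: "b \<le> y"
  proof -
    have "b = 4 * exp 1 * real D * (L * x0) / real s" unfolding b_def by (simp add: field_simps)
    also have "\<dots> = 4 * exp 1 * real D * L powr 0.1 / real s" unfolding Lx0 ..
    also have "\<dots> \<le> 4 * exp 1 * real D * L powr 0.1 / (L powr 0.2 / 2)"
      by (rule divide_left_mono[OF sh]) (use L0 s0 in auto)
    also have "\<dots> = 8 * exp 1 * real D * (L powr 0.1 / L powr 0.2)" by simp
    also have "L powr 0.1 / L powr 0.2 = L powr (-0.1)" by (simp add: powr_diff[symmetric])
    also have "8 * exp 1 * real D * L powr (-0.1) \<le> L powr 0.05 * L powr (-0.1)"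
      by (rule mult_right_mono[OF eD]) simp
    also have "L powr 0.05 * L powr (-0.1) = y" unfolding y_def by (simp add: powr_add[symmetric])
    finally show ?thesis .
  qed
  have "b^s \<le> y^s" by (rule power_mono[OF by_ b0])
  also have "y^s = y powr real s" using y0 by (simp add: powr_realpow)
  also have "\<dots> \<le> y powr (L powr 0.2 - 1)" by (rule powr_mono'[OF sL1]) (use y0 y1 in auto)
  finally have bs: "b^s \<le> y powr (L powr 0.2 - 1)" .
  have K0: "K \<ge> 0" unfolding K_def using D0 by simp
  have "K * L powr (0.9 * real (2*D+1)) * b^s \<le> K * L powr (0.9 * real (2*D+1)) * y powr (L powr 0.2 - 1)"
    by (rule mult_left_mono[OF bs]) (use K0 in simp)
  then show ?thesis using LHS unfolding x0_def y_def K_def by simp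
qed



lemma geom_le: fixes R :: real assumes "0 \<le> R" "R \<le> 1/2"
  shows "(\<Sum>j\<in>{1..n}. R ^ j) \<le> 2 * R"
proof -
  have "(\<Sum>j\<in>{1..n}. R ^ j) \<le> 2 * R * (1 - R ^ n)"
  proof (induction n)
    case 0 then show ?case by simp
  next
    case (Suc n)
    have "(\<Sum>j\<in>{1..Suc n}. R ^ j) = (\<Sum>j\<in>{1..n}. R ^ j) + R ^ Suc n" by simp
    also have "\<dots> \<le> 2 * R * (1 - R ^ n) + R ^ Suc n" using Suc by simp
    also have "\<dots> \<le> 2 * R * (1 - R ^ Suc n)"
    proof -
      have "2 * R * R ^ Suc n \<le> 1 * R ^ Suc n"
        by (rule mult_right_mono) (use assms in auto)
      then show ?thesis by (simp add: algebra_simps)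
    qed
    finally show ?case .
  qed
  also have "\<dots> \<le> 2 * R" using assms by (simp add: mult_left_le)
  finally show ?thesis .
qed

lemma main_n:
  fixes n D :: nat and \<epsilon> p :: real
  defines "L \<equiv> ln (real n)" and "c \<equiv> nat \<lfloor>(1 + \<epsilon>) * real n\<rfloor>"
    and "R \<equiv> exp (real (2*D+1)) / (2*real D)^(2*D) * ln (real n) powr (0.9 * real (2*D+1))
              * (ln (real n) powr (-0.05)) powr (ln (real n) powr 0.2 - 1)"
  assumes eps: "\<epsilon> > 0" and D: "D \<ge> 1" and L1: "L \<ge> 1" and L2: "L powr 0.2 \<ge> 2*D+2"
    and L9: "L powr 0.9 \<ge> 2*D" and eD: "8 * exp 1 * real D \<le> L powr 0.05"
    and Ln: "2 * L / real n \<le> 1" and pl: "L / real n \<le> p" and pu: "p \<le> 2 * L / real n"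
    and R: "R \<le> 1/2"
  shows "measure_pmf.prob (Gc n p c) {\<omega>. \<not> star_prop n D \<omega>} \<le> 2 * R"
proof -
  define s where "s = nat \<lfloor>ln (real n) powr 0.2\<rfloor>"
  define B where "B = real n / (ln (real n) powr 0.9)"
  have L0: "L > 0" using L1 by simp
  have "n \<noteq> 0" using L1 unfolding L_def by (cases n) auto
  then have n0: "real n > 0" by simp
  have n1: "n \<ge> 1" using n0 by simp
  have p0: "0 \<le> p" using pl L0 n0 by (meson divide_nonneg_pos less_le order_trans)
  have p1: "p \<le> 1" using pu Ln by simp
  have np: "real n * p \<le> 2 * L" using pu n0 by (simp add: field_simps)
  have cn: "n \<le> c" unfolding c_def by (rule le_nat_floor) (use eps n0 in simp)
  have c0: "c > 0" using cn n1 by simp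
  have sfl: "real s \<le> L powr 0.2 \<and> real s > L powr 0.2 - 1"
  proof -
    have "0 \<le> L powr 0.2" by simp
    then have "real s = of_int \<lfloor>L powr 0.2\<rfloor>" unfolding s_def L_def by simp
    then show ?thesis using floor_correct[of "L powr 0.2"] by linarith
  qed
  have s: "2*D+1 \<le> s"
  proof -
    have "real (2*D+1) < real s" using sfl L2 by simp
    then show ?thesis by linarith
  qed
  have hJ: "2 * D * j \<le> c" if "real j \<le> B" for j
  proof -
    have L90: "L powr 0.9 > 0" using L0 by simp
    have "real (2*D*j) = 2 * real D * real j" by simp
    also have "\<dots> \<le> 2 * real D * (real n / L powr 0.9)"
      by (rule mult_left_mono) (use that in \<open>auto simp: B_def L_def\<close>)
    also have "\<dots> = real n * (2 * real D / L powr 0.9)" by simp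
    also have "\<dots> \<le> real n * 1" using L9 L90 n0 by (intro mult_left_mono) (auto simp: divide_le_eq_1)
    also have "\<dots> \<le> real c" using cn by simp
    finally show ?thesis by (simp only: of_nat_le_iff)
  qed
  define x0 where "x0 = 1 / L powr 0.9"
  define r where "r = exp (real (2*D+1)) * (2*exp 1*L/real s)^s * (2*real D)^(s-2*D) * x0^(s-2*D-1)"
  have rR: "r \<le> R"
    unfolding r_def R_def x0_def L_def[symmetric]
    by (rule r_bound) (use D L1 s sfl L2 eD in auto)
  have r0: "0 \<le> r" unfolding r_def x0_def using L0 by simp
  define J where "J = {j. 1 \<le> j \<and> j \<le> n \<and> real j \<le> B}"
  have "measure_pmf.prob (Gc n p c) {\<omega>. \<not> star_prop n D \<omega>}
     \<le> (\<Sum>j\<in>J. real (c choose (2*D*j-1)) * real ((n * (n choose s)) choose j) * (p * real (2*D*j-1) / c) ^ (s*j))"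
    unfolding J_def s_def B_def by (rule prob_bad_bound[OF p0 p1 c0]) (use hJ B_def in auto)
  also have "\<dots> \<le> (\<Sum>j\<in>J. r ^ j)"
  proof (rule sum_mono)
    fix j assume "j \<in> J"
    then have j: "1 \<le> j" "j \<le> n" "real j \<le> B" unfolding J_def by auto
    have jx: "real j \<le> real n * x0" using j(3) unfolding B_def x0_def L_def by simp
    show "real (c choose (2*D*j-1)) * real ((n * (n choose s)) choose j) * (p * real (2*D*j-1) / c) ^ (s*j) \<le> r ^ j"
      unfolding r_def by (rule term_bound[OF D j(1) cn n1 hJ[OF j(3)] s p0 np jx])
  qed
  also have "\<dots> \<le> (\<Sum>j\<in>{1..n}. R ^ j)"
  proof -
    have "(\<Sum>j\<in>J. r ^ j) \<le> (\<Sum>j\<in>J. R ^ j)" by (intro sum_mono power_mono rR r0)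
    also have "\<dots> \<le> (\<Sum>j\<in>{1..n}. R ^ j)"
      by (rule sum_mono2) (use r0 rR in \<open>auto simp: J_def\<close>)
    finally show ?thesis .
  qed
  also have "\<dots> \<le> 2 * R" by (rule geom_le) (use r0 rR R in auto)
  finally show ?thesis .
qed



lemma asymp_aux: "((\<lambda>n::nat. ln (real n) powr a * (ln (real n) powr (-0.05)) powr (ln (real n) powr 0.2 - 1)) \<longlongrightarrow> 0) sequentially"
  by real_asymp

lemma lim_at_top_aux:
  "filterlim (\<lambda>n::nat. ln (real n)) at_top sequentially"
  "filterlim (\<lambda>n::nat. ln (real n) powr 0.2) at_top sequentially"
  "filterlim (\<lambda>n::nat. ln (real n) powr 0.9) at_top sequentially"
  "filterlim (\<lambda>n::nat. ln (real n) powr 0.05) at_top sequentially"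
  "((\<lambda>n::nat. 2 * ln (real n) / real n) \<longlongrightarrow> 0) sequentially"
  by real_asymp+

theorem lemma6:
  fixes \<epsilon> :: real and D :: nat and p :: "nat \<Rightarrow> real"
  assumes "\<epsilon> > 0" and "D > 0"
    and "\<forall>\<^sub>F n in sequentially. ln (real n) / real n \<le> p n \<and> p n \<le> 2 * ln (real n) / real n"
  shows "(\<lambda>n. measure_pmf.prob (Gc n (p n) (nat \<lfloor>(1 + \<epsilon>) * real n\<rfloor>)) {\<omega>. star_prop n D \<omega>})
           \<longlonglongrightarrow> 1"
proof -
  have D1: "D \<ge> 1" using assms(2) by simp
  define K where "K = exp (real (2*D+1)) / (2*real D)^(2*D)"
  define R where "R = (\<lambda>n::nat. exp (real (2*D+1)) / (2*real D)^(2*D) * ln (real n) powr (0.9 * real (2*D+1))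
              * (ln (real n) powr (-0.05)) powr (ln (real n) powr 0.2 - 1))"
  have Rlim: "R \<longlonglongrightarrow> 0"
  proof -
    have "(\<lambda>n. K * (ln (real n) powr (0.9 * real (2*D+1)) * (ln (real n) powr (-0.05)) powr (ln (real n) powr 0.2 - 1))) \<longlonglongrightarrow> K * 0"
      by (intro tendsto_mult tendsto_const asymp_aux)
    then show ?thesis unfolding R_def K_def by (simp add: mult.assoc)
  qed
  have e1: "\<forall>\<^sub>F n in sequentially. ln (real n) \<ge> 1"
    using lim_at_top_aux(1) by (simp add: filterlim_at_top)
  have e2: "\<forall>\<^sub>F n in sequentially. ln (real n) powr 0.2 \<ge> 2*D+2"
    using lim_at_top_aux(2) by (simp add: filterlim_at_top)
  have e3: "\<forall>\<^sub>F n in sequentially. ln (real n) powr 0.9 \<ge> 2*D"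
    using lim_at_top_aux(3) by (simp add: filterlim_at_top)
  have e4: "\<forall>\<^sub>F n in sequentially. ln (real n) powr 0.05 \<ge> 8 * exp 1 * real D"
    using lim_at_top_aux(4) by (simp add: filterlim_at_top)
  have e5: "\<forall>\<^sub>F n in sequentially. 2 * ln (real n) / real n < 1"
    using order_tendstoD(2)[OF lim_at_top_aux(5)] by simp
  have e6: "\<forall>\<^sub>F n in sequentially. R n < 1/2"
    using order_tendstoD(2)[OF Rlim, of "1/2"] by simp
  have bad: "\<forall>\<^sub>F n in sequentially.
      measure_pmf.prob (Gc n (p n) (nat \<lfloor>(1 + \<epsilon>) * real n\<rfloor>)) {\<omega>. \<not> star_prop n D \<omega>} \<le> 2 * R n"
    using e1 e2 e3 e4 e5 e6 assms(3)
  proof eventually_elim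
    case (elim n)
    show ?case unfolding R_def
      by (rule main_n[OF assms(1) D1]) (use elim in \<open>auto simp: R_def\<close>)
  qed
  have compl: "measure_pmf.prob (Gc n q c) {\<omega>. star_prop n D \<omega>}
      = 1 - measure_pmf.prob (Gc n q c) {\<omega>. \<not> star_prop n D \<omega>}" for n q c
  proof -
    have "{\<omega>. star_prop n D \<omega>} = space (measure_pmf (Gc n q c)) - {\<omega>. \<not> star_prop n D \<omega>}" by auto
    then show ?thesis using measure_pmf.prob_compl[of "{\<omega>. \<not> star_prop n D \<omega>}" "Gc n q c"] by simp
  qed
  have lower: "\<forall>\<^sub>F n in sequentially. 1 - 2 * R n \<le>
      measure_pmf.prob (Gc n (p n) (nat \<lfloor>(1 + \<epsilon>) * real n\<rfloor>)) {\<omega>. star_prop n D \<omega>}"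
    using bad by eventually_elim (simp add: compl)
  have upper: "\<forall>\<^sub>F n in sequentially.
      measure_pmf.prob (Gc n (p n) (nat \<lfloor>(1 + \<epsilon>) * real n\<rfloor>)) {\<omega>. star_prop n D \<omega>} \<le> 1"
    by simp
  have l1: "(\<lambda>n. 1 - 2 * R n) \<longlonglongrightarrow> 1 - 2 * 0"
    by (intro tendsto_diff tendsto_mult tendsto_const Rlim)
  show ?thesis
    by (rule tendsto_sandwich[OF lower upper]) (use l1 in auto)
qed

end
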